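(* Let $H=(\mathcal{V},\mathcal{I})$ be a proper interval hypergraph. Then $H$ is exactly hittable.
   Context: An interval hypergraph has vertex set $[n]=\{1,\dots,n\}$ and hyperedges that are nonempty sets of consecutive integers. It is proper if no interval is properly contained in another. It is exactly hittable if there is $S\subseteq\mathcal{V}$ with $|S\cap I|=1$ for every $I\in\mathcal{I}$. *)

theory Defs
  imports Main
begin

definition is_interval :: "nat set \<Rightarrow> bool" where
  "is_interval I \<longleftrightarrow> (\<exists>a b. a \<le> b \<and> I = {a..b})"

definition interval_hypergraph :: "nat \<Rightarrow> nat set set \<Rightarrow> bool" where
  "interval_hypergraph n E \<longleftrightarrow> (\<forall>I\<in>E. is_interval I \<and> I \<subseteq> {1..n})"

definition proper_hypergraph :: "nat set set \<Rightarrow> bool" where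
  "proper_hypergraph E \<longleftrightarrow> (\<forall>I\<in>E. \<forall>J\<in>E. \<not> I \<subset> J)"

definition exactly_hittable :: "nat \<Rightarrow> nat set set \<Rightarrow> bool" where
  "exactly_hittable n E \<longleftrightarrow> (\<exists>S. S \<subseteq> {1..n} \<and> (\<forall>I\<in>E. card (S \<inter> I) = 1))"

end

theory Submission
  imports Defs
begin

lemma intv_MinMax:
  assumes "is_interval I"
  shows "I = {Min I..Max I} \<and> Min I \<le> Max I"
proof -
  from assms obtain a b where "a \<le> b" "I = {a..b}" unfolding is_interval_def by blast
  moreover have "Min {a..b} = a" using \<open>a \<le> b\<close> by (intro Min_eqI) auto
  moreover have "Max {a..b} = b" using \<open>a \<le> b\<close> by (intro Max_eqI) auto
  ultimately show ?thesis by simp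
qed

lemma main:
  "finite E \<Longrightarrow> (\<forall>I\<in>E. is_interval I \<and> I \<subseteq> {1..n}) \<Longrightarrow> proper_hypergraph E \<Longrightarrow>
   \<exists>S. S \<subseteq> {1..n} \<and> (\<forall>I\<in>E. card (S \<inter> I) = 1) \<and> (\<forall>s\<in>S. \<exists>I\<in>E. Max I \<le> s)"
proof (induction "card E" arbitrary: E rule: less_induct)
  case less
  show ?case
  proof (cases "E = {}")
    case True
    then show ?thesis by auto
  next
    case False
    have iv: "\<And>I. I \<in> E \<Longrightarrow> (\<forall>y. (y \<in> I) = (Min I \<le> y \<and> y \<le> Max I)) \<and> Min I \<le> Max I \<and> I \<subseteq> {1..n}"
    proof -
      fix I assume "I \<in> E"
      hence "I = {Min I..Max I} \<and> Min I \<le> Max I" "I \<subseteq> {1..n}" using less.prems(2) intv_MinMax by blast+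
      thus "(\<forall>y. (y \<in> I) = (Min I \<le> y \<and> y \<le> Max I)) \<and> Min I \<le> Max I \<and> I \<subseteq> {1..n}"
        by (metis atLeastAtMost_iff)
    qed
    define x where "x = Min (Max ` E)"
    have "x \<in> Max ` E" unfolding x_def using False less.prems(1) by (intro Min_in) auto
    then obtain I0 where I0: "I0 \<in> E" "Max I0 = x" by auto
    have xle: "\<And>I. I \<in> E \<Longrightarrow> x \<le> Max I" unfolding x_def using less.prems(1) by simp
    define E' where "E' = {I\<in>E. x \<notin> I}"
    have E'sub: "E' \<subseteq> E" unfolding E'_def by auto
    have "I0 \<notin> E'" using iv[OF I0(1)] I0 unfolding E'_def by auto
    hence cE: "card E' < card E" using E'sub I0(1) less.prems(1)
      by (intro psubset_card_mono) auto
    have fE: "finite E'" using E'sub less.prems(1) finite_subset by blast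
    have iE: "\<forall>I\<in>E'. is_interval I \<and> I \<subseteq> {1..n}" using E'sub less.prems(2) by blast
    have pE: "proper_hypergraph E'" using E'sub less.prems(3)
      unfolding proper_hypergraph_def by blast
    from less.hyps[OF cE fE iE pE] obtain S' where S': "S' \<subseteq> {1..n}" "\<forall>I\<in>E'. card (S' \<inter> I) = 1"
      "\<forall>s\<in>S'. \<exists>I\<in>E'. Max I \<le> s" by blast
    have E'gt: "\<And>I y. I \<in> E' \<Longrightarrow> y \<in> I \<Longrightarrow> x < y"
    proof -
      fix I y assume "I \<in> E'" "y \<in> I"
      hence "I \<in> E" "x \<notin> I" unfolding E'_def by auto
      have "\<not> Min I \<le> x" using iv[OF \<open>I \<in> E\<close>] xle[OF \<open>I \<in> E\<close>] \<open>x \<notin> I\<close> by auto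
      moreover have "Min I \<le> y" using \<open>y \<in> I\<close> iv[OF \<open>I \<in> E\<close>] by auto
      ultimately show "x < y" by simp
    qed
    have cross: "\<And>I J. I \<in> E \<Longrightarrow> x \<in> I \<Longrightarrow> J \<in> E' \<Longrightarrow> Max I < Max J"
    proof (rule ccontr)
      fix I J assume a: "I \<in> E" "x \<in> I" "J \<in> E'" "\<not> Max I < Max J"
      have J: "J \<in> E" "x \<notin> J" using a(3) unfolding E'_def by auto
      have "Min J \<in> J" using iv[OF J(1)] by auto
      hence "x < Min J" using E'gt a(3) by blast
      moreover have "Min I \<le> x" using iv[OF a(1)] a(2) by auto
      ultimately have "J \<subseteq> I" using iv[OF J(1)] iv[OF a(1)] a(4) by auto
      hence "J \<subset> I" using a(2) J(2) by blast
      thus False using less.prems(3) a(1) J(1) unfolding proper_hypergraph_def by blast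
    qed
    define S where "S = insert x (S' \<inter> {x<..} \<inter> \<Union>E')"
    have "x \<in> {1..n}" using iv[OF I0(1)] I0 by auto
    hence "S \<subseteq> {1..n}" unfolding S_def using S' by auto
    moreover have "\<forall>I\<in>E. card (S \<inter> I) = 1"
    proof
      fix I assume I: "I \<in> E"
      show "card (S \<inter> I) = 1"
      proof (cases "x \<in> I")
        case True
        have "S \<inter> I = {x}"
        proof -
          have "s \<notin> I" if "s \<in> S' \<inter> {x<..} \<inter> \<Union>E'" for s
          proof -
            from that have "s \<in> S'" by auto
            then obtain J where J: "J \<in> E'" "Max J \<le> s" using S'(3) by blast
            have "Max J \<le> s" using J by blast
            moreover have "Max I < Max J" using cross I True J(1) by blast
            ultimately have "Max I < s" by simp
            moreover have "\<forall>y\<in>I. y \<le> Max I" using iv[OF I] by auto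
            ultimately show ?thesis by auto
          qed
          thus ?thesis unfolding S_def using True by auto
        qed
        thus ?thesis by simp
      next
        case False
        hence IE': "I \<in> E'" unfolding E'_def using I by auto
        have "S \<inter> I = S' \<inter> I" unfolding S_def using False E'gt[OF IE'] IE' by auto
        thus ?thesis using S'(2) IE' by simp
      qed
    qed
    moreover have "\<forall>s\<in>S. \<exists>I\<in>E. Max I \<le> s"
    proof
      fix s assume s: "s \<in> S"
      show "\<exists>I\<in>E. Max I \<le> s"
      proof (cases "s = x")
        case True
        then show ?thesis using I0 by auto
      next
        case False
        with s have "s \<in> S'" unfolding S_def by auto
        then obtain J where "J \<in> E'" "Max J \<le> s" using S'(3) by blast
        thus ?thesis using E'sub by blast
      qed
    qed
    ultimately show ?thesis by blast
  qed
qed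

theorem lemma9:
  fixes n :: nat and E :: "nat set set"
  assumes "interval_hypergraph n E"
    and "proper_hypergraph E"
  shows "exactly_hittable n E"
proof -
  have "E \<subseteq> Pow {1..n}" using assms(1) unfolding interval_hypergraph_def by blast
  hence "finite E" by (rule finite_subset) simp
  have fin: "finite E" by fact
  have "\<forall>I\<in>E. is_interval I \<and> I \<subseteq> {1..n}"
    using assms(1) unfolding interval_hypergraph_def by blast
  from main[OF fin this assms(2)] obtain S where "S \<subseteq> {1..n}" "\<forall>I\<in>E. card (S \<inter> I) = 1"
    by (elim exE conjE)
  thus ?thesis unfolding exactly_hittable_def by blast
qed

end
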